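(* Consider a Bayesian network with source $X$ as in the context, and let $W$ be a node and $V$ a set of nodes with $W\notin V$, $W\ne X$ and $W>v$ for all $v\in V$. Then $$\eta_{\mathrm{TV}}(P_{V\cup\{W\}|X})\le(1-\eta_W)\,\eta_{\mathrm{TV}}(P_{V|X})+\eta_W\,\eta_{\mathrm{TV}}(P_{V\cup\mathrm{pa}(W)|X}),$$ where $\eta_W=\eta_{\mathrm{TV}}(P_{Y_W|Y_{\mathrm{pa}(W)}})$. Moreover, for every set of nodes $V$, $\eta_{\mathrm{TV}}(P_{V|X})\le\mathrm{perc}(V)$, where percolation uses removal probabilities $1-\eta_{\mathrm{TV}}(P_{Y_v|Y_{\mathrm{pa}(v)}})$. In particular, if all these node coefficients are $<1$ then $\eta_{\mathrm{TV}}(P_{V|X})<1$ for every $V$ not containing $X$.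
   Context: Bayesian network: finite directed acyclic graph whose vertices are random variables $Y_v$ on finite alphabets, each non-source vertex $v$ with a kernel $P_{Y_v|Y_{\mathrm{pa}(v)}}$ from its parents $\mathrm{pa}(v)$; a distinguished parentless source $X$; vertices topologically sorted ($v_1>v_2$ implies no directed path from $v_1$ to $v_2$). $P_{V|X}$ is the induced kernel from $X$ to $(Y_v)_{v\in V}$. Total variation $d_{\mathrm{TV}}(P,Q)=\sup_E|P(E)-Q(E)|$. Dobrushin coefficient: $\eta_{\mathrm{TV}}(K)=\sup_{x,x'}d_{\mathrm{TV}}(K(\cdot|x),K(\cdot|x'))$ (equivalently the supremum of $d_{\mathrm{TV}}(K\circ P,K\circ Q)/d_{\mathrm{TV}}(P,Q)$). Site percolation: each node $v\ne X$ independently removed with probability $1-\eta_v$ ($X$ never removed; parentless nodes other than $X$ are removed); $\mathrm{perc}(V)$ is the probability of a directed path of non-removed nodes from $X$ to some node in $V$. *)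

theory Defs
  imports "HOL-Analysis.Analysis"
begin

definition tv_dist :: "'b set \<Rightarrow> ('b \<Rightarrow> real) \<Rightarrow> ('b \<Rightarrow> real) \<Rightarrow> real" where
  "tv_dist S p q = (SUP E \<in> Pow S. \<bar>(\<Sum>e\<in>E. p e) - (\<Sum>e\<in>E. q e)\<bar>)"

definition dobrushin :: "'i set \<Rightarrow> 'b set \<Rightarrow> ('i \<Rightarrow> 'b \<Rightarrow> real) \<Rightarrow> real" where
  "dobrushin I S K = (SUP p \<in> I \<times> I. tv_dist S (K (fst p)) (K (snd p)))"

text \<open>Bayesian network on nodes 0..n-1 (topologically sorted: parents are smaller),
  source X, parent sets pa, finite nonempty alphabets A v, kernels K v, where
  K v c b is the probability that Y_v = b given parent configuration c (a function on pa v).\<close>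
definition bayes_net ::
  "nat \<Rightarrow> nat \<Rightarrow> (nat \<Rightarrow> nat set) \<Rightarrow> (nat \<Rightarrow> 'a set) \<Rightarrow> (nat \<Rightarrow> (nat \<Rightarrow> 'a) \<Rightarrow> 'a \<Rightarrow> real) \<Rightarrow> bool"
  where
  "bayes_net n X pa A K \<longleftrightarrow>
     X < n \<and> pa X = {} \<and>
     (\<forall>v<n. pa v \<subseteq> {..<v}) \<and>
     (\<forall>v<n. finite (A v) \<and> A v \<noteq> {}) \<and>
     (\<forall>v<n. v \<noteq> X \<longrightarrow>
        (\<forall>c \<in> PiE (pa v) A. (\<forall>b\<in>A v. 0 \<le> K v c b) \<and> (\<Sum>b\<in>A v. K v c b) = 1))"

definition bn_joint ::
  "nat \<Rightarrow> nat \<Rightarrow> (nat \<Rightarrow> nat set) \<Rightarrow> (nat \<Rightarrow> (nat \<Rightarrow> 'a) \<Rightarrow> 'a \<Rightarrow> real) \<Rightarrow> (nat \<Rightarrow> 'a) \<Rightarrow> real"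
  where
  "bn_joint n X pa K y = (\<Prod>v \<in> {..<n} - {X}. K v (restrict y (pa v)) (y v))"

definition bn_marg ::
  "nat \<Rightarrow> nat \<Rightarrow> (nat \<Rightarrow> nat set) \<Rightarrow> (nat \<Rightarrow> 'a set) \<Rightarrow> (nat \<Rightarrow> (nat \<Rightarrow> 'a) \<Rightarrow> 'a \<Rightarrow> real)
     \<Rightarrow> nat set \<Rightarrow> 'a \<Rightarrow> (nat \<Rightarrow> 'a) \<Rightarrow> real"
  where
  "bn_marg n X pa A K V x z =
     (\<Sum>y \<in> {y \<in> PiE {..<n} A. y X = x \<and> restrict y V = z}. bn_joint n X pa K y)"

definition bn_eta ::
  "nat \<Rightarrow> nat \<Rightarrow> (nat \<Rightarrow> nat set) \<Rightarrow> (nat \<Rightarrow> 'a set) \<Rightarrow> (nat \<Rightarrow> (nat \<Rightarrow> 'a) \<Rightarrow> 'a \<Rightarrow> real)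
     \<Rightarrow> nat set \<Rightarrow> real"
  where
  "bn_eta n X pa A K V = dobrushin (A X) (PiE V A) (bn_marg n X pa A K V)"

definition node_eta ::
  "(nat \<Rightarrow> nat set) \<Rightarrow> (nat \<Rightarrow> 'a set) \<Rightarrow> (nat \<Rightarrow> (nat \<Rightarrow> 'a) \<Rightarrow> 'a \<Rightarrow> real) \<Rightarrow> nat \<Rightarrow> real"
  where
  "node_eta pa A K v = dobrushin (PiE (pa v) A) (A v) (K v)"

text \<open>Directed edges u -> v (u a parent of v) between non-removed nodes, when the set of
  kept nodes (other than X) is S; X is never removed.\<close>
definition perc_edges :: "(nat \<Rightarrow> nat set) \<Rightarrow> nat \<Rightarrow> nat set \<Rightarrow> (nat \<times> nat) set" where
  "perc_edges pa X S = {(u, v). v \<in> S \<and> u \<in> pa v \<and> (u \<in> S \<or> u = X)}"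

text \<open>Site percolation: each node v \<noteq> X kept independently with probability q v;
  probability of a directed path of kept nodes from X to some node of V.\<close>
definition perc :: "nat \<Rightarrow> nat \<Rightarrow> (nat \<Rightarrow> nat set) \<Rightarrow> (nat \<Rightarrow> real) \<Rightarrow> nat set \<Rightarrow> real" where
  "perc n X pa q V =
     (\<Sum>S \<in> Pow ({..<n} - {X}).
        (\<Prod>v\<in>S. q v) * (\<Prod>v \<in> ({..<n} - {X}) - S. 1 - q v) *
        (if \<exists>v\<in>V. (X, v) \<in> (perc_edges pa X S)\<^sup>* then 1 else 0))"

end

theory Submission
  imports Defs
begin


lemma tv_l1:
  fixes p q :: "'b \<Rightarrow> real"
  assumes fin: "finite S" and eq: "sum p S = sum q S"
  shows "tv_dist S p q = (\<Sum>s\<in>S. \<bar>p s - q s\<bar>) / 2"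
proof -
  define d where "d = (\<lambda>s. p s - q s)"
  define P where "P = (\<Sum>s\<in>S. max (d s) 0)"
  define M where "M = (\<Sum>s\<in>S. max (- d s) 0)"
  define L where "L = (\<Sum>s\<in>S. \<bar>d s\<bar>)"
  have d0: "sum d S = 0" using eq by (simp add: d_def sum_subtractf)
  have "P - M = sum d S" unfolding P_def M_def sum_subtractf[symmetric]
    by (rule sum.cong) auto
  hence PM: "P = M" using d0 by simp
  have "P + M = L" unfolding P_def M_def L_def sum.distrib[symmetric]
    by (rule sum.cong) auto
  hence PL: "P = L/2" "M = L/2" using PM by auto
  have bound: "\<bar>sum p E - sum q E\<bar> \<le> L/2" if "E \<in> Pow S" for E
  proof -
    have ES: "E \<subseteq> S" using that by auto
    have fE: "finite E" using ES fin finite_subset by auto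
    have e: "sum p E - sum q E = sum d E" by (simp add: d_def sum_subtractf)
    have "sum d E \<le> (\<Sum>s\<in>E. max (d s) 0)" by (rule sum_mono) auto
    also have "\<dots> \<le> P" unfolding P_def by (rule sum_mono2[OF fin ES]) auto
    finally have 1: "sum d E \<le> L/2" using PL by simp
    have "- sum d E \<le> (\<Sum>s\<in>E. max (- d s) 0)" unfolding sum_negf[symmetric] by (rule sum_mono) auto
    also have "\<dots> \<le> M" unfolding M_def by (rule sum_mono2[OF fin ES]) auto
    finally have 2: "- sum d E \<le> L/2" using PL by simp
    show ?thesis using 1 2 e by linarith
  qed
  define E0 where "E0 = {s\<in>S. d s > 0}"
  have "sum d E0 = (\<Sum>s\<in>S. if d s > 0 then d s else 0)" unfolding E0_def
    by (simp add: sum.inter_filter[OF fin])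
  also have "\<dots> = P" unfolding P_def by (rule sum.cong) auto
  moreover have "0 \<le> P" unfolding P_def by (rule sum_nonneg) auto
  ultimately have E0v: "\<bar>sum p E0 - sum q E0\<bar> = L/2" using PL by (simp add: d_def sum_subtractf)
  have E0S: "E0 \<in> Pow S" unfolding E0_def by auto
  have "tv_dist S p q = L/2" unfolding tv_dist_def
  proof (rule antisym)
    show "(SUP E\<in>Pow S. \<bar>sum p E - sum q E\<bar>) \<le> L / 2"
      by (rule cSUP_least) (use bound in auto)
    show "L / 2 \<le> (SUP E\<in>Pow S. \<bar>sum p E - sum q E\<bar>)"
      by (rule cSUP_upper2[OF _ E0S]) (use fin E0v in auto)
  qed
  thus ?thesis by (simp add: L_def d_def)
qed

lemma fiber_pos:
  fixes f :: "'u \<Rightarrow> real" and L :: "'u \<Rightarrow> 'w \<Rightarrow> real"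
  assumes fF: "finite F" and fO: "finite \<Omega>"
    and Lnn: "\<And>u w. u\<in>F \<Longrightarrow> w\<in>\<Omega> \<Longrightarrow> 0 \<le> L u w"
    and Ls: "\<And>u. u\<in>F \<Longrightarrow> sum (L u) \<Omega> = 1"
    and Ld: "\<And>u u'. u\<in>F \<Longrightarrow> u'\<in>F \<Longrightarrow> (\<Sum>w\<in>\<Omega>. \<bar>L u w - L u' w\<bar>) \<le> 2*\<eta>"
    and pos: "0 \<le> sum f F"
  shows "(\<Sum>w\<in>\<Omega>. \<bar>\<Sum>u\<in>F. f u * L u w\<bar>) \<le> \<eta> * (\<Sum>u\<in>F. \<bar>f u\<bar>) + (1-\<eta>) * \<bar>\<Sum>u\<in>F. f u\<bar>"
proof -
  define fp where "fp = (\<lambda>u. max (f u) 0)"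
  define fm where "fm = (\<lambda>u. max (- f u) 0)"
  define p where "p = sum fp F"
  define m where "m = sum fm F"
  have fpm: "f u = fp u - fm u" for u by (auto simp: fp_def fm_def)
  have fabs: "\<bar>f u\<bar> = fp u + fm u" for u by (auto simp: fp_def fm_def)
  have fpn: "0 \<le> fp u" "0 \<le> fm u" for u by (auto simp: fp_def fm_def)
  have sf: "sum f F = p - m" unfolding p_def m_def sum_subtractf[symmetric] using fpm by simp
  have sa: "(\<Sum>u\<in>F. \<bar>f u\<bar>) = p + m" unfolding p_def m_def sum.distrib[symmetric] using fabs by simp
  have pm: "m \<le> p" using pos sf by simp
  have m0: "0 \<le> m" unfolding m_def by (rule sum_nonneg) (simp add: fpn)
  define Aw where "Aw = (\<lambda>w. \<Sum>u\<in>F. fp u * L u w)"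
  define Bw where "Bw = (\<lambda>w. \<Sum>u\<in>F. fm u * L u w)"
  define g where "g = (\<lambda>w. \<Sum>u\<in>F. f u * L u w)"
  define h where "h = (\<lambda>w. \<Sum>u\<in>F. \<Sum>u'\<in>F. fp u * fm u' * (L u w - L u' w))"
  have g_eq: "g w = Aw w - Bw w" for w
    unfolding g_def Aw_def Bw_def sum_subtractf[symmetric] by (rule sum.cong) (auto simp: fpm algebra_simps)
  have h_eq: "h w = m * Aw w - p * Bw w" for w
  proof -
    have "h w = (\<Sum>u\<in>F. \<Sum>u'\<in>F. fm u' * (fp u * L u w)) - (\<Sum>u\<in>F. \<Sum>u'\<in>F. fp u * (fm u' * L u' w))"
      unfolding h_def sum_subtractf[symmetric] by (rule sum.cong, simp, rule sum.cong) (auto simp: algebra_simps)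
    also have "\<dots> = m * Aw w - p * Bw w"
      unfolding m_def p_def Aw_def Bw_def sum_distrib_left sum_distrib_right
      by (subst (2) sum.swap) simp
    finally show ?thesis .
  qed
  have Apos: "0 \<le> Aw w" if "w \<in> \<Omega>" for w unfolding Aw_def
    by (rule sum_nonneg) (simp add: fpn Lnn that)
  have key: "p * \<bar>g w\<bar> \<le> \<bar>h w\<bar> + (p - m) * Aw w" if "w \<in> \<Omega>" for w
  proof -
    have "p * g w = h w + (p - m) * Aw w" by (simp add: g_eq h_eq algebra_simps)
    moreover have "\<bar>p * g w\<bar> = p * \<bar>g w\<bar>" using pm m0 by (simp add: abs_mult)
    ultimately have "p * \<bar>g w\<bar> = \<bar>h w + (p - m) * Aw w\<bar>" by simp
    also have "\<dots> \<le> \<bar>h w\<bar> + (p - m) * Aw w" using Apos[OF that] pm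
      by (smt (verit) mult_nonneg_nonneg)
    finally show ?thesis .
  qed
  have sumA: "sum Aw \<Omega> = p" unfolding Aw_def p_def
    by (subst sum.swap) (simp add: sum_distrib_left[symmetric] Ls)
  have sumh: "(\<Sum>w\<in>\<Omega>. \<bar>h w\<bar>) \<le> 2 * \<eta> * p * m"
  proof -
    have "(\<Sum>w\<in>\<Omega>. \<bar>h w\<bar>) \<le> (\<Sum>w\<in>\<Omega>. \<Sum>u\<in>F. \<Sum>u'\<in>F. fp u * fm u' * \<bar>L u w - L u' w\<bar>)"
      unfolding h_def
      apply (rule sum_mono)
      apply (rule order_trans[OF sum_abs], rule sum_mono)
      apply (rule order_trans[OF sum_abs], rule sum_mono)
      by (simp add: abs_mult fpn)
    also have "\<dots> = (\<Sum>u\<in>F. \<Sum>w\<in>\<Omega>. \<Sum>u'\<in>F. fp u * fm u' * \<bar>L u w - L u' w\<bar>)"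
      by (rule sum.swap)
    also have "\<dots> = (\<Sum>u\<in>F. \<Sum>u'\<in>F. \<Sum>w\<in>\<Omega>. fp u * fm u' * \<bar>L u w - L u' w\<bar>)"
      by (rule sum.cong[OF refl], rule sum.swap)
    also have "\<dots> = (\<Sum>u\<in>F. \<Sum>u'\<in>F. fp u * fm u' * (\<Sum>w\<in>\<Omega>. \<bar>L u w - L u' w\<bar>))"
      by (simp add: sum_distrib_left)
    also have "\<dots> \<le> (\<Sum>u\<in>F. \<Sum>u'\<in>F. fp u * fm u' * (2 * \<eta>))"
      apply (rule sum_mono, rule sum_mono)
      by (rule mult_left_mono) (auto simp: Ld fpn)
    also have "\<dots> = 2*\<eta>*(\<Sum>u\<in>F. \<Sum>u'\<in>F. fp u * fm u')" by (simp add: sum_distrib_left algebra_simps)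
    also have "\<dots> = 2 * \<eta> * p * m" unfolding p_def m_def by (simp add: sum_product mult.assoc)
    finally show ?thesis .
  qed
  have main: "p * (\<Sum>w\<in>\<Omega>. \<bar>g w\<bar>) \<le> 2 * \<eta> * p * m + (p - m) * p"
  proof -
    have "p * (\<Sum>w\<in>\<Omega>. \<bar>g w\<bar>) \<le> (\<Sum>w\<in>\<Omega>. \<bar>h w\<bar> + (p - m) * Aw w)"
      unfolding sum_distrib_left by (rule sum_mono) (use key in auto)
    also have "\<dots> = (\<Sum>w\<in>\<Omega>. \<bar>h w\<bar>) + (p - m) * p"
      by (simp add: sum.distrib sum_distrib_left[symmetric] sumA)
    finally show ?thesis using sumh by linarith
  qed
  show ?thesis
  proof (cases "p = 0")
    case True
    hence "m = 0" using pm m0 by simp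
    hence "\<forall>u\<in>F. fm u = 0" using sum_nonneg_eq_0_iff[OF fF] fpn unfolding m_def by blast
    moreover have "\<forall>u\<in>F. fp u = 0" using True sum_nonneg_eq_0_iff[OF fF] fpn unfolding p_def by blast
    ultimately have "\<forall>u\<in>F. f u = 0" using fpm by simp
    thus ?thesis by simp
  next
    case False
    hence pp: "p > 0" using pm m0 by simp
    from main have "p * (\<Sum>w\<in>\<Omega>. \<bar>g w\<bar>) \<le> p * (2 * \<eta> * m + (p - m))" by (simp add: algebra_simps)
    hence "(\<Sum>w\<in>\<Omega>. \<bar>g w\<bar>) \<le> 2 * \<eta> * m + (p - m)" using pp by simp
    thus ?thesis unfolding g_def sa sf using pm by (simp add: algebra_simps)
  qed
qed

lemma fiber:
  fixes f :: "'u \<Rightarrow> real" and L :: "'u \<Rightarrow> 'w \<Rightarrow> real"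
  assumes fF: "finite F" and fO: "finite \<Omega>"
    and Lnn: "\<And>u w. u\<in>F \<Longrightarrow> w\<in>\<Omega> \<Longrightarrow> 0 \<le> L u w"
    and Ls: "\<And>u. u\<in>F \<Longrightarrow> sum (L u) \<Omega> = 1"
    and Ld: "\<And>u u'. u\<in>F \<Longrightarrow> u'\<in>F \<Longrightarrow> (\<Sum>w\<in>\<Omega>. \<bar>L u w - L u' w\<bar>) \<le> 2*\<eta>"
  shows "(\<Sum>w\<in>\<Omega>. \<bar>\<Sum>u\<in>F. f u * L u w\<bar>) \<le> \<eta> * (\<Sum>u\<in>F. \<bar>f u\<bar>) + (1-\<eta>) * \<bar>\<Sum>u\<in>F. f u\<bar>"
proof (cases "0 \<le> sum f F")
  case True
  show ?thesis by (rule fiber_pos) (use assms True in auto)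
next
  case False
  have "0 \<le> sum (\<lambda>u. - f u) F" using False by (simp add: sum_negf)
  have "(\<Sum>w\<in>\<Omega>. \<bar>\<Sum>u\<in>F. (- f u) * L u w\<bar>) \<le> \<eta> * (\<Sum>u\<in>F. \<bar>- f u\<bar>) + (1-\<eta>) * \<bar>\<Sum>u\<in>F. - f u\<bar>"
    by (rule fiber_pos) (use assms \<open>0 \<le> sum (\<lambda>u. - f u) F\<close> in auto)
  thus ?thesis by (simp add: sum_negf)
qed

lemma tv_self: "finite S \<Longrightarrow> tv_dist S p p = 0"
  by (simp add: tv_l1)

lemma tv_bounds:
  fixes p q :: "'b \<Rightarrow> real"
  assumes "finite S" "\<And>s. s\<in>S \<Longrightarrow> 0 \<le> p s" "\<And>s. s\<in>S \<Longrightarrow> 0 \<le> q s"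
    "sum p S = 1" "sum q S = 1"
  shows "0 \<le> tv_dist S p q" "tv_dist S p q \<le> 1"
proof -
  have t: "tv_dist S p q = (\<Sum>s\<in>S. \<bar>p s - q s\<bar>) / 2" using assms by (simp add: tv_l1)
  have "(\<Sum>s\<in>S. \<bar>p s - q s\<bar>) \<le> (\<Sum>s\<in>S. p s + q s)"
    by (rule sum_mono) (use assms in force)
  also have "\<dots> = 2" using assms by (simp add: sum.distrib)
  finally show "tv_dist S p q \<le> 1" using t by simp
  have "0 \<le> (\<Sum>s\<in>S. \<bar>p s - q s\<bar>)" by (rule sum_nonneg) simp
  thus "0 \<le> tv_dist S p q" using t by linarith
qed

lemma dob_upper:
  assumes "finite I" "i \<in> I" "i' \<in> I"
  shows "tv_dist S (K i) (K i') \<le> dobrushin I S K"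
  unfolding dobrushin_def
  by (rule cSUP_upper2[where x="(i,i')"]) (use assms in auto)

lemma dob_least:
  assumes "I \<noteq> {}" "\<And>i i'. i\<in>I \<Longrightarrow> i'\<in>I \<Longrightarrow> tv_dist S (K i) (K i') \<le> c"
  shows "dobrushin I S K \<le> c"
  unfolding dobrushin_def
  by (rule cSUP_least) (use assms in auto)

lemma sum_PiE_insert:
  assumes "k \<notin> S"
  shows "(\<Sum>y\<in>PiE (insert k S) A. h y) = (\<Sum>a\<in>A k. \<Sum>g\<in>PiE S A. h (g(k:=a)))"
  unfolding PiE_insert_eq
  apply (subst sum.reindex[OF inj_combinator[OF assms]])
  apply (simp add: sum.cartesian_product o_def case_prod_unfold)
  done

lemma sum_collapse:
  assumes "finite T" "\<And>y. y\<in>S \<Longrightarrow> \<phi> y \<in> T"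
  shows "(\<Sum>u\<in>T. \<Sum>y\<in>S. if \<phi> y = u then h y u else 0) = (\<Sum>y\<in>S. h y (\<phi> y))"
  apply (subst sum.swap)
  apply (rule sum.cong[OF refl])
  using assms by (simp add: sum.delta)

lemma pow_split:
  fixes q :: "nat \<Rightarrow> real"
  assumes fU: "finite U" and WU: "W \<in> U"
  shows "(\<Sum>S\<in>Pow U. (\<Prod>v\<in>S. q v) * (\<Prod>v\<in>U - S. 1 - q v) * g S)
       = (\<Sum>T\<in>Pow (U-{W}). (\<Prod>v\<in>T. q v) * (\<Prod>v\<in>(U-{W}) - T. 1 - q v) * ((1 - q W) * g T + q W * g (insert W T)))"
proof -
  define U' where "U' = U - {W}"
  have U: "U = insert W U'" "W \<notin> U'" "finite U'" using WU fU by (auto simp: U'_def)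
  have inj: "inj_on (insert W) (Pow U')" using U(2) unfolding inj_on_def
    by (metis PowD Set.set_insert insert_absorb insert_ident subset_iff)
  have disj: "Pow U' \<inter> insert W ` Pow U' = {}" using U(2) by auto
  define wt where "wt = (\<lambda>S. (\<Prod>v\<in>S. q v) * (\<Prod>v\<in>U - S. 1 - q v) * g S)"
  have "(\<Sum>S\<in>Pow U. wt S) = (\<Sum>S\<in>Pow U'. wt S) + (\<Sum>S\<in>insert W ` Pow U'. wt S)"
    unfolding U(1) Pow_insert by (rule sum.union_disjoint) (use U disj in auto)
  also have "(\<Sum>S\<in>insert W ` Pow U'. wt S) = (\<Sum>T\<in>Pow U'. wt (insert W T))"
    by (simp add: sum.reindex[OF inj])
  finally have e: "(\<Sum>S\<in>Pow U. wt S) = (\<Sum>T\<in>Pow U'. wt T + wt (insert W T))"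
    by (simp add: sum.distrib)
  show ?thesis
    unfolding wt_def[symmetric] e U'_def[symmetric]
  proof (rule sum.cong[OF refl])
    fix T assume T: "T \<in> Pow U'"
    hence TU: "T \<subseteq> U'" "W \<notin> T" "finite T" using U finite_subset by auto
    have a: "U - insert W T = U' - T" using U by auto
    have b: "U - T = insert W (U' - T)" using U TU by auto
    have c: "(\<Prod>v\<in>insert W T. q v) = q W * (\<Prod>v\<in>T. q v)" using TU by simp
    have d: "(\<Prod>v\<in>U - T. 1 - q v) = (1 - q W) * (\<Prod>v\<in>U' - T. 1 - q v)"
      unfolding b using U by simp
    show "wt T + wt (insert W T) = (\<Prod>v\<in>T. q v) * (\<Prod>v\<in>U' - T. 1 - q v) * ((1 - q W) * g T + q W * g (insert W T))"
      unfolding wt_def a c d by (simp add: algebra_simps)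
  qed
qed

lemma pow_weights_sum:
  fixes q :: "nat \<Rightarrow> real"
  assumes "finite U"
  shows "(\<Sum>S\<in>Pow U. (\<Prod>v\<in>S. q v) * (\<Prod>v\<in>U - S. 1 - q v)) = 1"
  using prod_add[OF assms, of q "\<lambda>v. 1 - q v"] by simp



locale BN =
  fixes n X :: nat and pa :: "nat \<Rightarrow> nat set" and A :: "nat \<Rightarrow> 'a set"
    and K :: "nat \<Rightarrow> (nat \<Rightarrow> 'a) \<Rightarrow> 'a \<Rightarrow> real"
  assumes bn: "bayes_net n X pa A K"
begin

lemma Xn: "X < n" and paX: "pa X = {}" and pa_lt: "v < n \<Longrightarrow> pa v \<subseteq> {..<v}"
  and finA: "v < n \<Longrightarrow> finite (A v)" and neA: "v < n \<Longrightarrow> A v \<noteq> {}"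
  and Knn: "v < n \<Longrightarrow> v \<noteq> X \<Longrightarrow> c \<in> PiE (pa v) A \<Longrightarrow> b \<in> A v \<Longrightarrow> 0 \<le> K v c b"
  and Ksum: "v < n \<Longrightarrow> v \<noteq> X \<Longrightarrow> c \<in> PiE (pa v) A \<Longrightarrow> sum (K v c) (A v) = 1"
  using bn unfolding bayes_net_def by auto

lemma finPi: "S \<subseteq> {..<n} \<Longrightarrow> finite (PiE S A)"
  by (rule finite_PiE) (auto intro: finite_subset finA)

lemma nePi: "S \<subseteq> {..<n} \<Longrightarrow> PiE S A \<noteq> {}"
  using neA by (auto simp: PiE_eq_empty_iff)

lemma restrict_in: "y \<in> PiE T A \<Longrightarrow> S \<subseteq> T \<Longrightarrow> restrict y S \<in> PiE S A"
  by (auto simp: restrict_PiE_iff)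

definition J :: "nat \<Rightarrow> (nat \<Rightarrow> 'a) \<Rightarrow> real" where
  "J m y = (\<Prod>v\<in>{..<m}-{X}. K v (restrict y (pa v)) (y v))"

definition F :: "nat \<Rightarrow> 'a \<Rightarrow> nat set \<Rightarrow> (nat \<Rightarrow> 'a) \<Rightarrow> real" where
  "F m x V z = (\<Sum>y\<in>PiE {..<m} A. if (X < m \<longrightarrow> y X = x) \<and> restrict y V = z then J m y else 0)"

lemma F_n: "bn_marg n X pa A K V x z = F n x V z"
  unfolding bn_marg_def F_def bn_joint_def J_def
  using Xn by (simp add: sum.inter_filter finPi)

lemma J_upd:
  assumes "m < n"
  shows "J (Suc m) (g(m:=a)) = (if m = X then 1 else K m (restrict g (pa m)) a) * J m g"
proof -
  have r: "restrict (g(m:=a)) (pa v) = restrict g (pa v)" if "v \<le> m" for v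
    using pa_lt[of v] that assms by (intro restrict_fupd) auto
  have p: "(\<Prod>v\<in>{..<m}-{X}. K v (restrict (g(m:=a)) (pa v)) ((g(m:=a)) v)) = J m g"
    unfolding J_def by (rule prod.cong) (auto simp: r)
  show ?thesis
  proof (cases "m = X")
    case True
    hence "{..<Suc m}-{X} = {..<m}-{X}" by auto
    then show ?thesis using True p unfolding J_def by simp
  next
    case False
    hence "{..<Suc m}-{X} = insert m ({..<m}-{X})" by auto
    then show ?thesis using False p r[of m] unfolding J_def by simp
  qed
qed

lemma F_step:
  assumes mn: "m < n" and V: "V \<subseteq> {..<m}" and x: "x \<in> A X"
  shows "F (Suc m) x V z = F m x V z"
proof -
  have e: "F (Suc m) x V z = (\<Sum>a\<in>A m. \<Sum>g\<in>PiE {..<m} A.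
      (if (X < Suc m \<longrightarrow> (g(m:=a)) X = x) \<and> restrict (g(m:=a)) V = z then J (Suc m) (g(m:=a)) else 0))"
    unfolding F_def lessThan_Suc by (rule sum_PiE_insert) simp
  have rV: "restrict (g(m:=a)) V = restrict g V" for g a
    using V by (intro restrict_fupd) auto
  have finm: "finite (A m)" using finA mn by simp
  show ?thesis
  proof (cases "m = X")
    case True
    have "F (Suc m) x V z = (\<Sum>g\<in>PiE {..<m} A. \<Sum>a\<in>A m.
      (if a = x then (if restrict g V = z then J m g else 0) else 0))"
    proof -
      have Ju: "J (Suc m) (g(m:=a)) = J m g" for g a
        using J_upd[OF mn] True by simp
      have c: "(X < Suc m \<longrightarrow> (g(m:=a)) X = x) = (a = x)" for g a
        using True by auto
      show ?thesis unfolding e rV Ju c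
        by (subst sum.swap) (intro sum.cong refl, auto)
    qed
    also have "\<dots> = F m x V z" unfolding F_def using True x finm
      by (intro sum.cong) (auto simp: sum.delta')
    finally show ?thesis .
  next
    case False
    have c: "(X < Suc m \<longrightarrow> (g(m:=a)) X = x) = (X < m \<longrightarrow> g X = x)" for g a
      using False by auto
    have "F (Suc m) x V z = (\<Sum>g\<in>PiE {..<m} A. \<Sum>a\<in>A m.
      (if (X < m \<longrightarrow> g X = x) \<and> restrict g V = z then K m (restrict g (pa m)) a * J m g else 0))"
    proof -
      have Ju: "J (Suc m) (g(m:=a)) = K m (restrict g (pa m)) a * J m g" for g a
        using J_upd[OF mn] False by simp
      show ?thesis unfolding e rV Ju c by (rule sum.swap)
    qed
    also have "\<dots> = F m x V z" unfolding F_def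
    proof (rule sum.cong[OF refl])
      fix g assume g: "g \<in> PiE {..<m} A"
      have "restrict g (pa m) \<in> PiE (pa m) A" using restrict_in[OF g] pa_lt[OF mn] by auto
      hence "sum (K m (restrict g (pa m))) (A m) = 1" using Ksum mn False by blast
      thus "(\<Sum>a\<in>A m. if (X < m \<longrightarrow> g X = x) \<and> restrict g V = z then K m (restrict g (pa m)) a * J m g else 0)
        = (if (X < m \<longrightarrow> g X = x) \<and> restrict g V = z then J m g else 0)"
        by (simp add: sum_distrib_right[symmetric])
    qed
    finally show ?thesis .
  qed
qed

lemma F_down:
  assumes mn: "m \<le> n" and V: "V \<subseteq> {..<m}" and x: "x \<in> A X"
  shows "bn_marg n X pa A K V x z = F m x V z"
proof -
  have "m + d \<le> n \<longrightarrow> F (m + d) x V z = F m x V z" for d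
  proof (induction d)
    case 0 then show ?case by simp
  next
    case (Suc d)
    show ?case
    proof
      assume h: "m + Suc d \<le> n"
      have V': "V \<subseteq> {..<m+d}" using V by auto
      have "F (Suc (m + d)) x V z = F (m + d) x V z"
        by (rule F_step) (use h V' x in auto)
      thus "F (m + Suc d) x V z = F m x V z" using Suc h by simp
    qed
  qed
  from this[of "n - m"] show ?thesis using mn F_n by simp
qed

lemma marg_group:
  assumes VV: "V \<subseteq> V'" "V' \<subseteq> {..<n}" and x: "x \<in> A X"
  shows "bn_marg n X pa A K V x c = (\<Sum>u\<in>PiE V' A. if restrict u V = c then bn_marg n X pa A K V' x u else 0)"
proof -
  have "(\<Sum>u\<in>PiE V' A. if restrict u V = c then bn_marg n X pa A K V' x u else 0)
    = (\<Sum>u\<in>PiE V' A. \<Sum>y\<in>PiE {..<n} A. if restrict y V' = u then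
         (if (X < n \<longrightarrow> y X = x) \<and> restrict u V = c then J n y else 0) else 0)"
    unfolding F_n F_def
  proof (rule sum.cong[OF refl])
    fix u
    show "(if restrict u V = c then \<Sum>y\<in>PiE {..<n} A. if (X < n \<longrightarrow> y X = x) \<and> restrict y V' = u then J n y else 0 else 0)
      = (\<Sum>y\<in>PiE {..<n} A. if restrict y V' = u then
         (if (X < n \<longrightarrow> y X = x) \<and> restrict u V = c then J n y else 0) else 0)"
    proof (cases "restrict u V = c")
      case True
      show ?thesis unfolding if_P[OF True] by (intro sum.cong refl) (use True in auto)
    next
      case False
      show ?thesis unfolding if_not_P[OF False]
        by (rule sum.neutral[symmetric]) (use False in auto)
    qed
  qed
  also have "\<dots> = (\<Sum>y\<in>PiE {..<n} A. if (X < n \<longrightarrow> y X = x) \<and> restrict (restrict y V') V = c then J n y else 0)"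
    by (rule sum_collapse) (use finPi VV restrict_in in auto)
  also have "\<dots> = bn_marg n X pa A K V x c"
  proof -
    have "V \<inter> V' = V" "V' \<inter> V = V" using VV by auto
    thus ?thesis unfolding F_n F_def by simp
  qed
  finally show ?thesis by simp
qed

lemma marg_empty: "x \<in> A X \<Longrightarrow> bn_marg n X pa A K {} x (\<lambda>_. undefined) = 1"
  by (subst F_down[of 0]) (auto simp: F_def J_def)

lemma marg_sum1:
  assumes "V \<subseteq> {..<n}" "x \<in> A X"
  shows "sum (bn_marg n X pa A K V x) (PiE V A) = 1"
proof -
  have r: "restrict u {} = (\<lambda>_. undefined)" for u :: "nat \<Rightarrow> 'a" by (auto simp: restrict_def)
  show ?thesis using marg_group[of "{}" V x "\<lambda>_. undefined"] assms marg_empty r by simp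
qed

lemma marg_nonneg: "0 \<le> bn_marg n X pa A K V x z"
  unfolding bn_marg_def bn_joint_def
proof (intro sum_nonneg prod_nonneg)
  fix y v assume y: "y \<in> {y \<in> PiE {..<n} A. y X = x \<and> restrict y V = z}" and v: "v \<in> {..<n} - {X}"
  have "pa v \<subseteq> {..<n}" using pa_lt[of v] v by auto
  hence "restrict y (pa v) \<in> PiE (pa v) A" using restrict_in[of y "{..<n}" "pa v"] y by auto
  moreover have "y v \<in> A v" using y v by auto
  ultimately show "0 \<le> K v (restrict y (pa v)) (y v)" using Knn v by auto
qed

lemma bn_eta_bounds:
  assumes "V \<subseteq> {..<n}"
  shows "0 \<le> bn_eta n X pa A K V" "bn_eta n X pa A K V \<le> 1"
proof -
  have t: "0 \<le> tv_dist (PiE V A) (bn_marg n X pa A K V x) (bn_marg n X pa A K V x')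
        \<and> tv_dist (PiE V A) (bn_marg n X pa A K V x) (bn_marg n X pa A K V x') \<le> 1"
    if "x \<in> A X" "x' \<in> A X" for x x'
    using tv_bounds[OF finPi[OF assms]] marg_nonneg marg_sum1 assms that by auto
  obtain x where x: "x \<in> A X" using neA Xn by blast
  show "bn_eta n X pa A K V \<le> 1" unfolding bn_eta_def
    by (rule dob_least) (use neA Xn t in auto)
  have "tv_dist (PiE V A) (bn_marg n X pa A K V x) (bn_marg n X pa A K V x) \<le> bn_eta n X pa A K V"
    unfolding bn_eta_def by (rule dob_upper) (use finA Xn x in auto)
  thus "0 \<le> bn_eta n X pa A K V" using t[OF x x] by linarith
qed

lemma bn_eta_empty: "bn_eta n X pa A K {} = 0"
proof -
  have "bn_eta n X pa A K {} \<le> 0" unfolding bn_eta_def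
  proof (rule dob_least)
    show "A X \<noteq> {}" using neA Xn by simp
    fix x x' assume "x \<in> A X" "x' \<in> A X"
    thus "tv_dist (PiE {} A) (bn_marg n X pa A K {} x) (bn_marg n X pa A K {} x') \<le> 0"
      by (simp add: tv_l1 marg_empty)
  qed
  thus ?thesis using bn_eta_bounds[of "{}"] by simp
qed

lemma node_eta_bounds:
  assumes "v < n" "v \<noteq> X"
  shows "0 \<le> node_eta pa A K v" "node_eta pa A K v \<le> 1"
proof -
  have "pa v \<subseteq> {..<n}" using pa_lt[of v] assms by auto
  hence P: "finite (PiE (pa v) A)" "PiE (pa v) A \<noteq> {}" using finPi nePi by auto
  have t: "0 \<le> tv_dist (A v) (K v c) (K v c') \<and> tv_dist (A v) (K v c) (K v c') \<le> 1"
    if "c \<in> PiE (pa v) A" "c' \<in> PiE (pa v) A" for c c'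
    using tv_bounds[OF finA[OF assms(1)]] Knn Ksum assms that by auto
  obtain c where c: "c \<in> PiE (pa v) A" using P by blast
  show "node_eta pa A K v \<le> 1" unfolding node_eta_def
    by (rule dob_least) (use P t in auto)
  have "tv_dist (A v) (K v c) (K v c) \<le> node_eta pa A K v"
    unfolding node_eta_def by (rule dob_upper) (use P c in auto)
  thus "0 \<le> node_eta pa A K v" using t[OF c c] by linarith
qed


lemma rz_iff:
  assumes z: "z \<in> PiE (V \<union> {W}) A" and WV: "W \<notin> V"
  shows "(restrict (g(W:=a)) (V \<union> {W}) = z) = (restrict g V = restrict z V \<and> a = z W)"
proof
  assume h: "restrict (g(W:=a)) (V \<union> {W}) = z"
  have "a = z W" using fun_cong[OF h, of W] by simp
  moreover have "restrict g V = restrict z V"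
  proof (rule ext)
    fix t show "restrict g V t = restrict z V t"
    proof (cases "t \<in> V")
      case True
      hence "t \<noteq> W" using WV by auto
      then show ?thesis using fun_cong[OF h, of t] True by auto
    qed auto
  qed
  ultimately show "restrict g V = restrict z V \<and> a = z W" by simp
next
  assume h: "restrict g V = restrict z V \<and> a = z W"
  show "restrict (g(W:=a)) (V \<union> {W}) = z"
  proof (rule ext)
    fix t
    show "restrict (g(W:=a)) (V \<union> {W}) t = z t"
    proof (cases "t \<in> V \<union> {W}")
      case True
      then show ?thesis
      proof
        assume t: "t \<in> V"
        have "t \<noteq> W" using t WV by auto
        then show ?thesis using fun_cong[OF conjunct1[OF h], of t] t by auto
      next
        assume "t \<in> {W}" then show ?thesis using h by auto
      qed
    next
      case False
      then show ?thesis using PiE_arb[OF z False] by simp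
    qed
  qed
qed

lemma decomp:
  assumes Wn: "W < n" and WX: "W \<noteq> X" and WV: "W \<notin> V" and Vl: "\<forall>v\<in>V. v < W"
    and x: "x \<in> A X" and z: "z \<in> PiE (V \<union> {W}) A"
  shows "bn_marg n X pa A K (V \<union> {W}) x z = (\<Sum>u\<in>PiE (V \<union> pa W) A.
     if restrict u V = restrict z V then bn_marg n X pa A K (V \<union> pa W) x u * K W (restrict u (pa W)) (z W) else 0)"
proof -
  have VW: "V \<subseteq> {..<W}" using Vl by auto
  have paW: "pa W \<subseteq> {..<W}" using pa_lt[OF Wn] .
  have zW: "z W \<in> A W" using z by auto
  have finW: "finite (A W)" using finA Wn by simp
  have Ju: "J (Suc W) (g(W:=a)) = K W (restrict g (pa W)) a * J W g" for g a
    using J_upd[OF Wn] WX by simp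
  have c: "(X < Suc W \<longrightarrow> (g(W:=a)) X = x) = (X < W \<longrightarrow> g X = x)" for g a
    using WX by auto
  have "bn_marg n X pa A K (V \<union> {W}) x z = F (Suc W) x (V \<union> {W}) z"
    by (rule F_down) (use Wn VW x in auto)
  also have "\<dots> = (\<Sum>a\<in>A W. \<Sum>g\<in>PiE {..<W} A.
      (if (X < Suc W \<longrightarrow> (g(W:=a)) X = x) \<and> restrict (g(W:=a)) (V \<union> {W}) = z then J (Suc W) (g(W:=a)) else 0))"
    unfolding F_def lessThan_Suc by (rule sum_PiE_insert) simp
  also have "\<dots> = (\<Sum>g\<in>PiE {..<W} A. \<Sum>a\<in>A W. if a = z W then
      (if (X < W \<longrightarrow> g X = x) \<and> restrict g V = restrict z V then K W (restrict g (pa W)) a * J W g else 0) else 0)"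
    unfolding c Ju rz_iff[OF z WV] by (subst sum.swap) (intro sum.cong refl, auto)
  also have "\<dots> = (\<Sum>g\<in>PiE {..<W} A.
      (if (X < W \<longrightarrow> g X = x) \<and> restrict g V = restrict z V then K W (restrict g (pa W)) (z W) * J W g else 0))"
    using zW finW by (simp add: sum.delta')
  finally have L: "bn_marg n X pa A K (V \<union> {W}) x z = \<dots>" .
  have VpW: "V \<union> pa W \<subseteq> {..<W}" using VW paW by auto
  have "(\<Sum>u\<in>PiE (V \<union> pa W) A.
     if restrict u V = restrict z V then bn_marg n X pa A K (V \<union> pa W) x u * K W (restrict u (pa W)) (z W) else 0)
    = (\<Sum>u\<in>PiE (V \<union> pa W) A.
     if restrict u V = restrict z V then F W x (V \<union> pa W) u * K W (restrict u (pa W)) (z W) else 0)"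
  proof -
    have "\<And>u. bn_marg n X pa A K (V \<union> pa W) x u = F W x (V \<union> pa W) u"
      by (rule F_down) (use Wn VpW x in auto)
    thus ?thesis by (intro sum.cong refl) presburger
  qed
  also have "\<dots> = (\<Sum>u\<in>PiE (V \<union> pa W) A. \<Sum>g\<in>PiE {..<W} A. if restrict g (V \<union> pa W) = u then
      (if (X < W \<longrightarrow> g X = x) \<and> restrict u V = restrict z V then K W (restrict u (pa W)) (z W) * J W g else 0) else 0)"
    unfolding F_def
  proof (rule sum.cong[OF refl])
    fix u
    show "(if restrict u V = restrict z V then (\<Sum>g\<in>PiE {..<W} A. if (X < W \<longrightarrow> g X = x) \<and> restrict g (V \<union> pa W) = u then J W g else 0) * K W (restrict u (pa W)) (z W) else 0)
      = (\<Sum>g\<in>PiE {..<W} A. if restrict g (V \<union> pa W) = u then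
      (if (X < W \<longrightarrow> g X = x) \<and> restrict u V = restrict z V then K W (restrict u (pa W)) (z W) * J W g else 0) else 0)"
    proof (cases "restrict u V = restrict z V")
      case True
      show ?thesis unfolding if_P[OF True] sum_distrib_right
        by (intro sum.cong refl) (use True in auto)
    next
      case False
      show ?thesis unfolding if_not_P[OF False]
        by (rule sum.neutral[symmetric]) (use False in auto)
    qed
  qed
  also have "\<dots> = (\<Sum>g\<in>PiE {..<W} A.
      (if (X < W \<longrightarrow> g X = x) \<and> restrict (restrict g (V \<union> pa W)) V = restrict z V
        then K W (restrict (restrict g (V \<union> pa W)) (pa W)) (z W) * J W g else 0))"
  proof (rule sum_collapse)
    have "V \<union> pa W \<subseteq> {..<n}" using VpW Wn by auto
    thus "finite (PiE (V \<union> pa W) A)" by (rule finPi)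
    fix g assume "g \<in> PiE {..<W} A"
    thus "restrict g (V \<union> pa W) \<in> PiE (V \<union> pa W) A" using restrict_in VpW by blast
  qed
  also have "\<dots> = (\<Sum>g\<in>PiE {..<W} A.
      (if (X < W \<longrightarrow> g X = x) \<and> restrict g V = restrict z V then K W (restrict g (pa W)) (z W) * J W g else 0))"
  proof -
    have "restrict (restrict g (V \<union> pa W)) (pa W) = restrict g (pa W)"
      "restrict (restrict g (V \<union> pa W)) V = restrict g V" for g :: "nat \<Rightarrow> 'a"
      by (auto simp: restrict_def)
    thus ?thesis by (simp only:)
  qed
  finally show ?thesis using L by simp
qed


lemma tv_step:
  assumes Wn: "W < n" and WX: "W \<noteq> X" and WV: "W \<notin> V" and Vl: "\<forall>v\<in>V. v < W"
    and x: "x \<in> A X" and x': "x' \<in> A X"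
  shows "tv_dist (PiE (V \<union> {W}) A) (bn_marg n X pa A K (V \<union> {W}) x) (bn_marg n X pa A K (V \<union> {W}) x')
     \<le> node_eta pa A K W * tv_dist (PiE (V \<union> pa W) A) (bn_marg n X pa A K (V \<union> pa W) x) (bn_marg n X pa A K (V \<union> pa W) x')
       + (1 - node_eta pa A K W) * tv_dist (PiE V A) (bn_marg n X pa A K V x) (bn_marg n X pa A K V x')"
proof -
  define \<eta> where "\<eta> = node_eta pa A K W"
  define B where "B = PiE (V \<union> pa W) A"
  define C where "C = PiE V A"
  define f where "f = (\<lambda>u. bn_marg n X pa A K (V \<union> pa W) x u - bn_marg n X pa A K (V \<union> pa W) x' u)"
  define L where "L = (\<lambda>u. K W (restrict u (pa W)))"
  define Fib where "Fib = (\<lambda>c. {u. u \<in> B \<and> restrict u V = c})"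
  have VW: "V \<subseteq> {..<W}" using Vl by auto
  have paW: "pa W \<subseteq> {..<W}" using pa_lt[OF Wn] .
  have VpWn: "V \<union> pa W \<subseteq> {..<n}" using VW paW Wn by auto
  have Vn: "V \<subseteq> {..<n}" "V \<union> {W} \<subseteq> {..<n}" using VW Wn by auto
  have finB: "finite B" unfolding B_def using finPi[OF VpWn] .
  have finC: "finite C" unfolding C_def using finPi[OF Vn(1)] .
  have finW: "finite (A W)" using finA Wn by simp
  have finFib: "finite (Fib c)" for c unfolding Fib_def using finB by simp
  have paWn: "pa W \<subseteq> {..<n}" using paW Wn by auto
  have LP: "restrict u (pa W) \<in> PiE (pa W) A" if "u \<in> B" for u
    using restrict_in[of u "V \<union> pa W" "pa W"] that unfolding B_def by auto
  have d: "bn_marg n X pa A K (V \<union> {W}) x z - bn_marg n X pa A K (V \<union> {W}) x' z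
      = (\<Sum>u\<in>Fib (restrict z V). f u * L u (z W))" if z: "z \<in> PiE (V \<union> {W}) A" for z
  proof -
    have "bn_marg n X pa A K (V \<union> {W}) x z - bn_marg n X pa A K (V \<union> {W}) x' z
      = (\<Sum>u\<in>B. if restrict u V = restrict z V then f u * L u (z W) else 0)"
      unfolding decomp[OF Wn WX WV Vl x z] decomp[OF Wn WX WV Vl x' z] B_def[symmetric]
        sum_subtractf[symmetric]
      by (rule sum.cong) (auto simp: f_def L_def algebra_simps)
    also have "\<dots> = (\<Sum>u\<in>Fib (restrict z V). f u * L u (z W))"
      unfolding Fib_def using sum.inter_filter[OF finB, of "\<lambda>u. f u * L u (z W)" "\<lambda>u. restrict u V = restrict z V"]
      by simp
    finally show ?thesis .
  qed
  have "(\<Sum>z\<in>PiE (V \<union> {W}) A. \<bar>bn_marg n X pa A K (V \<union> {W}) x z - bn_marg n X pa A K (V \<union> {W}) x' z\<bar>)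
      = (\<Sum>z\<in>PiE (insert W V) A. \<bar>\<Sum>u\<in>Fib (restrict z V). f u * L u (z W)\<bar>)"
  proof (rule sum.cong)
    show "PiE (V \<union> {W}) A = PiE (insert W V) A" by simp
    fix z assume "z \<in> PiE (insert W V) A"
    hence z: "z \<in> PiE (V \<union> {W}) A" by simp
    show "\<bar>bn_marg n X pa A K (V \<union> {W}) x z - bn_marg n X pa A K (V \<union> {W}) x' z\<bar>
      = \<bar>\<Sum>u\<in>Fib (restrict z V). f u * L u (z W)\<bar>" unfolding d[OF z] ..
  qed
  also have "\<dots> = (\<Sum>w\<in>A W. \<Sum>c\<in>C. \<bar>\<Sum>u\<in>Fib (restrict (c(W:=w)) V). f u * L u ((c(W:=w)) W)\<bar>)"
    unfolding C_def by (rule sum_PiE_insert[OF WV])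
  also have "\<dots> = (\<Sum>w\<in>A W. \<Sum>c\<in>C. \<bar>\<Sum>u\<in>Fib c. f u * L u w\<bar>)"
  proof (intro sum.cong refl)
    fix w c assume "c \<in> C"
    hence "restrict (c(W:=w)) V = c" unfolding C_def using WV by (simp add: restrict_fupd)
    thus "\<bar>\<Sum>u\<in>Fib (restrict (c(W:=w)) V). f u * L u ((c(W:=w)) W)\<bar> = \<bar>\<Sum>u\<in>Fib c. f u * L u w\<bar>" by simp
  qed
  also have "\<dots> = (\<Sum>c\<in>C. \<Sum>w\<in>A W. \<bar>\<Sum>u\<in>Fib c. f u * L u w\<bar>)" by (rule sum.swap)
  also have "\<dots> \<le> (\<Sum>c\<in>C. \<eta> * (\<Sum>u\<in>Fib c. \<bar>f u\<bar>) + (1-\<eta>) * \<bar>\<Sum>u\<in>Fib c. f u\<bar>)"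
  proof (rule sum_mono, rule fiber[OF finFib finW])
    fix c u w assume u: "u \<in> Fib c" and w: "w \<in> A W"
    have "u \<in> B" using u unfolding Fib_def by simp
    thus "0 \<le> L u w" unfolding L_def using Knn[OF Wn WX LP w] by simp
  next
    fix c u assume u: "u \<in> Fib c"
    have "u \<in> B" using u unfolding Fib_def by simp
    thus "sum (L u) (A W) = 1" unfolding L_def using Ksum[OF Wn WX LP] by simp
  next
    fix c u u' assume u: "u \<in> Fib c" and u': "u' \<in> Fib c"
    have uB: "u \<in> B" "u' \<in> B" using u u' unfolding Fib_def by auto
    have "tv_dist (A W) (L u) (L u') = (\<Sum>w\<in>A W. \<bar>L u w - L u' w\<bar>) / 2"
      by (rule tv_l1[OF finW]) (simp add: L_def Ksum[OF Wn WX LP[OF uB(1)]] Ksum[OF Wn WX LP[OF uB(2)]])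
    moreover have "tv_dist (A W) (L u) (L u') \<le> \<eta>" unfolding \<eta>_def node_eta_def L_def
      by (rule dob_upper[OF finPi[OF paWn] LP[OF uB(1)] LP[OF uB(2)]])
    ultimately show "(\<Sum>w\<in>A W. \<bar>L u w - L u' w\<bar>) \<le> 2 * \<eta>" by simp
  qed
  also have "\<dots> = \<eta> * (\<Sum>c\<in>C. \<Sum>u\<in>Fib c. \<bar>f u\<bar>) + (1-\<eta>) * (\<Sum>c\<in>C. \<bar>\<Sum>u\<in>Fib c. f u\<bar>)"
    by (simp add: sum.distrib sum_distrib_left)
  also have "(\<Sum>c\<in>C. \<Sum>u\<in>Fib c. \<bar>f u\<bar>) = (\<Sum>u\<in>B. \<bar>f u\<bar>)"
    unfolding Fib_def by (rule sum.group[OF finB finC]) (auto simp: B_def C_def intro: restrict_in)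
  also have "(\<Sum>c\<in>C. \<bar>\<Sum>u\<in>Fib c. f u\<bar>) = (\<Sum>c\<in>C. \<bar>bn_marg n X pa A K V x c - bn_marg n X pa A K V x' c\<bar>)"
  proof (intro sum.cong refl)
    fix c
    have g: "bn_marg n X pa A K V y c = (\<Sum>u\<in>Fib c. bn_marg n X pa A K (V \<union> pa W) y u)" if "y \<in> A X" for y
    proof -
      have "bn_marg n X pa A K V y c = (\<Sum>u\<in>PiE (V \<union> pa W) A. if restrict u V = c then bn_marg n X pa A K (V \<union> pa W) y u else 0)"
        by (rule marg_group) (use VpWn that in auto)
      also have "\<dots> = (\<Sum>u\<in>Fib c. bn_marg n X pa A K (V \<union> pa W) y u)"
        unfolding Fib_def B_def by (simp add: sum.inter_filter[OF finPi[OF VpWn]])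
      finally show ?thesis .
    qed
    show "\<bar>\<Sum>u\<in>Fib c. f u\<bar> = \<bar>bn_marg n X pa A K V x c - bn_marg n X pa A K V x' c\<bar>"
      unfolding g[OF x] g[OF x'] f_def sum_subtractf ..
  qed
  finally have main: "(\<Sum>z\<in>PiE (V \<union> {W}) A. \<bar>bn_marg n X pa A K (V \<union> {W}) x z - bn_marg n X pa A K (V \<union> {W}) x' z\<bar>)
     \<le> \<eta> * (\<Sum>u\<in>B. \<bar>f u\<bar>) + (1-\<eta>) * (\<Sum>c\<in>C. \<bar>bn_marg n X pa A K V x c - bn_marg n X pa A K V x' c\<bar>)" .
  have t1: "tv_dist (PiE (V \<union> {W}) A) (bn_marg n X pa A K (V \<union> {W}) x) (bn_marg n X pa A K (V \<union> {W}) x')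
     = (\<Sum>z\<in>PiE (V \<union> {W}) A. \<bar>bn_marg n X pa A K (V \<union> {W}) x z - bn_marg n X pa A K (V \<union> {W}) x' z\<bar>) / 2"
    by (rule tv_l1[OF finPi[OF Vn(2)]]) (use marg_sum1[OF Vn(2) x] marg_sum1[OF Vn(2) x'] in simp)
  have t2: "tv_dist B (bn_marg n X pa A K (V \<union> pa W) x) (bn_marg n X pa A K (V \<union> pa W) x') = (\<Sum>u\<in>B. \<bar>f u\<bar>) / 2"
    unfolding f_def B_def
    by (rule tv_l1[OF finPi[OF VpWn]]) (simp add: marg_sum1[OF VpWn x] marg_sum1[OF VpWn x'])
  have t3: "tv_dist C (bn_marg n X pa A K V x) (bn_marg n X pa A K V x') = (\<Sum>c\<in>C. \<bar>bn_marg n X pa A K V x c - bn_marg n X pa A K V x' c\<bar>) / 2"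
    unfolding C_def
    by (rule tv_l1[OF finPi[OF Vn(1)]]) (simp add: marg_sum1[OF Vn(1) x] marg_sum1[OF Vn(1) x'])
  show ?thesis using main unfolding t1 \<eta>_def[symmetric] B_def[symmetric] C_def[symmetric] t2 t3
    by (simp add: field_simps)
qed

lemma claim1:
  assumes Wn: "W < n" and WX: "W \<noteq> X" and WV: "W \<notin> V" and Vl: "\<forall>v\<in>V. v < W"
  shows "bn_eta n X pa A K (V \<union> {W})
          \<le> (1 - node_eta pa A K W) * bn_eta n X pa A K V + node_eta pa A K W * bn_eta n X pa A K (V \<union> pa W)"
  unfolding bn_eta_def
proof (rule dob_least)
  show "A X \<noteq> {}" using neA Xn by simp
  have finX: "finite (A X)" using finA Xn by simp
  have eb: "0 \<le> node_eta pa A K W" "node_eta pa A K W \<le> 1" using node_eta_bounds Wn WX by auto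
  fix x x' assume x: "x \<in> A X" and x': "x' \<in> A X"
  have a: "tv_dist (PiE (V \<union> pa W) A) (bn_marg n X pa A K (V \<union> pa W) x) (bn_marg n X pa A K (V \<union> pa W) x')
     \<le> dobrushin (A X) (PiE (V \<union> pa W) A) (bn_marg n X pa A K (V \<union> pa W))"
    by (rule dob_upper[OF finX x x'])
  have b: "tv_dist (PiE V A) (bn_marg n X pa A K V x) (bn_marg n X pa A K V x')
     \<le> dobrushin (A X) (PiE V A) (bn_marg n X pa A K V)"
    by (rule dob_upper[OF finX x x'])
  have "node_eta pa A K W * tv_dist (PiE (V \<union> pa W) A) (bn_marg n X pa A K (V \<union> pa W) x) (bn_marg n X pa A K (V \<union> pa W) x')
     \<le> node_eta pa A K W * dobrushin (A X) (PiE (V \<union> pa W) A) (bn_marg n X pa A K (V \<union> pa W))"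
    by (rule mult_left_mono[OF a eb(1)])
  moreover have "(1 - node_eta pa A K W) * tv_dist (PiE V A) (bn_marg n X pa A K V x) (bn_marg n X pa A K V x')
     \<le> (1 - node_eta pa A K W) * dobrushin (A X) (PiE V A) (bn_marg n X pa A K V)"
    by (rule mult_left_mono[OF b]) (use eb in simp)
  ultimately show "tv_dist (PiE (V \<union> {W}) A) (bn_marg n X pa A K (V \<union> {W}) x) (bn_marg n X pa A K (V \<union> {W}) x')
     \<le> (1 - node_eta pa A K W) * dobrushin (A X) (PiE V A) (bn_marg n X pa A K V)
       + node_eta pa A K W * dobrushin (A X) (PiE (V \<union> pa W) A) (bn_marg n X pa A K (V \<union> pa W))"
    using tv_step[OF Wn WX WV Vl x x'] by linarith
qed


abbreviation "E S \<equiv> perc_edges pa X S"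

lemma edge_lt: "(a, b) \<in> E S \<Longrightarrow> S \<subseteq> {..<n} \<Longrightarrow> a < b \<and> b \<in> S"
  unfolding perc_edges_def using pa_lt by auto

lemma reach_trunc:
  assumes "(X, b) \<in> (E S)\<^sup>*" "S \<subseteq> {..<n}" "b \<le> t"
  shows "(X, b) \<in> (E (S \<inter> {..t}))\<^sup>*"
  using assms
proof (induction rule: rtrancl_induct)
  case base then show ?case by simp
next
  case (step a b)
  have ab: "a < b" "b \<in> S" using edge_lt[OF step.hyps(2) step.prems(1)] by auto
  have "(X, a) \<in> (E (S \<inter> {..t}))\<^sup>*" using step ab by auto
  moreover have "(a, b) \<in> E (S \<inter> {..t})" using step.hyps(2) ab step.prems(2)
    unfolding perc_edges_def by auto
  ultimately show ?case by (rule rtrancl_into_rtrancl)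
qed

lemma reach_mono: "S \<subseteq> S' \<Longrightarrow> (X, b) \<in> (E S)\<^sup>* \<Longrightarrow> (X, b) \<in> (E S')\<^sup>*"
proof -
  assume "S \<subseteq> S'" "(X, b) \<in> (E S)\<^sup>*"
  moreover have "E S \<subseteq> E S'" using \<open>S \<subseteq> S'\<close> unfolding perc_edges_def by auto
  ultimately show ?thesis using rtrancl_mono by blast
qed

lemma reach_eq:
  assumes "S \<subseteq> {..<n}" "S' \<subseteq> {..<n}" "S \<inter> {..t} = S' \<inter> {..t}" "b \<le> t"
  shows "((X, b) \<in> (E S)\<^sup>*) = ((X, b) \<in> (E S')\<^sup>*)"
proof
  assume "(X, b) \<in> (E S)\<^sup>*"
  hence "(X, b) \<in> (E (S \<inter> {..t}))\<^sup>*" using reach_trunc assms by blast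
  thus "(X, b) \<in> (E S')\<^sup>*" using reach_mono[of "S' \<inter> {..t}" S'] assms(3) by auto
next
  assume "(X, b) \<in> (E S')\<^sup>*"
  hence "(X, b) \<in> (E (S' \<inter> {..t}))\<^sup>*" using reach_trunc assms by blast
  thus "(X, b) \<in> (E S)\<^sup>*" using reach_mono[of "S \<inter> {..t}" S] assms(3) by auto
qed

lemma reach_in: "(X, u) \<in> (E S)\<^sup>* \<Longrightarrow> u = X \<or> u \<in> S"
  by (erule rtranclE) (auto simp: perc_edges_def)

lemma reach_W:
  assumes "W \<noteq> X"
  shows "((X, W) \<in> (E S)\<^sup>*) = (W \<in> S \<and> (\<exists>u\<in>pa W. (X, u) \<in> (E S)\<^sup>*))"
proof
  assume "(X, W) \<in> (E S)\<^sup>*"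
  then show "W \<in> S \<and> (\<exists>u\<in>pa W. (X, u) \<in> (E S)\<^sup>*)"
    using assms by (cases rule: rtranclE) (auto simp: perc_edges_def)
next
  assume h: "W \<in> S \<and> (\<exists>u\<in>pa W. (X, u) \<in> (E S)\<^sup>*)"
  then obtain u where u: "u \<in> pa W" "(X, u) \<in> (E S)\<^sup>*" by blast
  have "(u, W) \<in> E S" using h u reach_in[OF u(2)] unfolding perc_edges_def by auto
  thus "(X, W) \<in> (E S)\<^sup>*" using u(2) by (rule rtrancl_into_rtrancl[rotated])
qed

lemma perc_rec:
  fixes q :: "nat \<Rightarrow> real"
  assumes Wn: "W < n" and WX: "W \<noteq> X" and WV: "W \<notin> V" and Vl: "\<forall>v\<in>V. v < W"
  shows "perc n X pa q (V \<union> {W}) = (1 - q W) * perc n X pa q V + q W * perc n X pa q (V \<union> pa W)"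
proof -
  define U where "U = {..<n} - {X}"
  define wt where "wt = (\<lambda>T. (\<Prod>v\<in>T. q v) * (\<Prod>v\<in>(U-{W}) - T. 1 - q v))"
  define I where "I = (\<lambda>S V. if \<exists>v\<in>V. (X, v) \<in> (E S)\<^sup>* then 1 else (0::real))"
  have fU: "finite U" and WU: "W \<in> U" using Wn WX by (auto simp: U_def)
  have pd: "perc n X pa q V' = (\<Sum>T\<in>Pow (U-{W}). wt T * ((1 - q W) * I T V' + q W * I (insert W T) V'))" for V'
    unfolding perc_def U_def[symmetric] wt_def I_def by (rule pow_split[OF fU WU])
  have paW: "pa W \<subseteq> {..<W}" using pa_lt[OF Wn] .
  have lt: "I (insert W T) V' = I T V'" if T: "T \<in> Pow (U-{W})" and V': "\<forall>v\<in>V'. v < W" for T V'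
  proof -
    have "((X, v) \<in> (E (insert W T))\<^sup>*) = ((X, v) \<in> (E T)\<^sup>*)" if "v \<in> V'" for v
      by (rule reach_eq[where t=v]) (use T V' that Wn in \<open>auto simp: U_def\<close>)
    thus ?thesis unfolding I_def by simp
  qed
  have a: "I T (V \<union> {W}) = I T V" if T: "T \<in> Pow (U-{W})" for T
  proof -
    have "\<not> (X, W) \<in> (E T)\<^sup>*" using reach_in[of W T] T WX by auto
    thus ?thesis unfolding I_def by auto
  qed
  have b: "I (insert W T) (V \<union> {W}) = I T (V \<union> pa W)" if T: "T \<in> Pow (U-{W})" for T
  proof -
    have r: "((X, v) \<in> (E (insert W T))\<^sup>*) = ((X, v) \<in> (E T)\<^sup>*)" if "v < W" for v
      by (rule reach_eq[where t=v]) (use T that Wn in \<open>auto simp: U_def\<close>)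
    have "((X, W) \<in> (E (insert W T))\<^sup>*) = (\<exists>u\<in>pa W. (X, u) \<in> (E T)\<^sup>*)"
      unfolding reach_W[OF WX] using r paW by auto
    moreover have "(\<exists>v\<in>V. (X, v) \<in> (E (insert W T))\<^sup>*) = (\<exists>v\<in>V. (X, v) \<in> (E T)\<^sup>*)"
      using r Vl by auto
    ultimately show ?thesis unfolding I_def by auto
  qed
  have VpW: "\<forall>v\<in>V \<union> pa W. v < W" using Vl paW by auto
  have "perc n X pa q (V \<union> {W}) = (\<Sum>T\<in>Pow (U-{W}). wt T * ((1 - q W) * I T V + q W * I T (V \<union> pa W)))"
    unfolding pd by (intro sum.cong refl) (simp only: a b)
  also have "\<dots> = (1 - q W) * (\<Sum>T\<in>Pow (U-{W}). wt T * I T V) + q W * (\<Sum>T\<in>Pow (U-{W}). wt T * I T (V \<union> pa W))"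
  proof -
    have "(\<Sum>T\<in>Pow (U-{W}). wt T * ((1 - q W) * I T V + q W * I T (V \<union> pa W)))
      = (\<Sum>T\<in>Pow (U-{W}). (1 - q W) * (wt T * I T V) + q W * (wt T * I T (V \<union> pa W)))"
      by (intro sum.cong refl) (simp add: algebra_simps)
    thus ?thesis by (simp only: sum.distrib sum_distrib_left)
  qed
  also have "(\<Sum>T\<in>Pow (U-{W}). wt T * I T V) = perc n X pa q V"
    unfolding pd by (intro sum.cong refl) (simp add: lt Vl algebra_simps)
  also have "(\<Sum>T\<in>Pow (U-{W}). wt T * I T (V \<union> pa W)) = perc n X pa q (V \<union> pa W)"
    unfolding pd by (intro sum.cong refl) (simp add: lt[OF _ VpW] algebra_simps)
  finally show ?thesis .
qed

lemma perc_one: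
  assumes "X \<in> V"
  shows "perc n X pa q V = 1"
proof -
  have "perc n X pa q V = (\<Sum>S\<in>Pow ({..<n} - {X}). (\<Prod>v\<in>S. q v) * (\<Prod>v\<in>({..<n} - {X}) - S. 1 - q v))"
    unfolding perc_def using assms by (intro sum.cong refl) auto
  also have "\<dots> = 1" by (rule pow_weights_sum) simp
  finally show ?thesis .
qed

lemma perc_nonneg:
  assumes "\<And>v. v < n \<Longrightarrow> v \<noteq> X \<Longrightarrow> 0 \<le> q v \<and> q v \<le> 1"
  shows "0 \<le> perc n X pa q V"
  unfolding perc_def
proof (intro sum_nonneg mult_nonneg_nonneg prod_nonneg)
  fix S v assume "S \<in> Pow ({..<n} - {X})" "v \<in> S"
  thus "0 \<le> q v" using assms by auto
next
  fix S v assume "S \<in> Pow ({..<n} - {X})" "v \<in> {..<n} - {X} - S"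
  thus "0 \<le> 1 - q v" using assms by auto
qed auto

lemma max_split:
  assumes "V \<subseteq> {..<n}" "V \<noteq> {}"
  obtains W where "W \<in> V" "W < n" "W \<notin> V - {W}" "\<forall>v\<in>V - {W}. v < W" "V = (V - {W}) \<union> {W}"
proof -
  have f: "finite V" using assms(1) finite_subset by auto
  define W where "W = Max V"
  have W: "W \<in> V" using Max_in[OF f assms(2)] W_def by simp
  have "\<forall>v\<in>V - {W}. v < W" using Max_ge[OF f] W_def by (auto simp: order.order_iff_strict)
  thus ?thesis using that W assms(1) by blast
qed

lemma claim2:
  "V \<subseteq> {..<n} \<Longrightarrow> bn_eta n X pa A K V \<le> perc n X pa (node_eta pa A K) V"
proof -
  have qb: "\<And>v. v < n \<Longrightarrow> v \<noteq> X \<Longrightarrow> 0 \<le> node_eta pa A K v \<and> node_eta pa A K v \<le> 1"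
    using node_eta_bounds by auto
  have "\<forall>V. V \<subseteq> {..<n} \<longrightarrow> V \<subseteq> {..<k} \<longrightarrow> bn_eta n X pa A K V \<le> perc n X pa (node_eta pa A K) V" for k
  proof (induction k rule: less_induct)
    case (less k)
    show ?case
    proof (intro allI impI)
      fix V assume Vn: "V \<subseteq> {..<n}" and Vk: "V \<subseteq> {..<k}"
      show "bn_eta n X pa A K V \<le> perc n X pa (node_eta pa A K) V"
      proof (cases "X \<in> V")
        case True
        then show ?thesis using perc_one bn_eta_bounds[OF Vn] by simp
      next
        case XV: False
        show ?thesis
        proof (cases "V = {}")
          case True
          then show ?thesis using bn_eta_empty perc_nonneg[OF qb] by simp
        next
          case False
          obtain W where W: "W \<in> V" "W < n" "W \<notin> V - {W}" "\<forall>v\<in>V - {W}. v < W" "V = (V - {W}) \<union> {W}"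
            using max_split[OF Vn False] by blast
          define V' where "V' = V - {W}"
          have WX: "W \<noteq> X" using W XV by auto
          have Wk: "W < k" using W Vk by auto
          have paW: "pa W \<subseteq> {..<W}" using pa_lt[OF W(2)] .
          have s1: "V' \<subseteq> {..<n}" "V' \<subseteq> {..<W}" using Vn W unfolding V'_def by auto
          have s2: "V' \<union> pa W \<subseteq> {..<n}" "V' \<union> pa W \<subseteq> {..<W}" using s1 paW W by auto
          have ih1: "bn_eta n X pa A K V' \<le> perc n X pa (node_eta pa A K) V'"
            using less.IH[OF Wk] s1 by blast
          have ih2: "bn_eta n X pa A K (V' \<union> pa W) \<le> perc n X pa (node_eta pa A K) (V' \<union> pa W)"
            using less.IH[OF Wk] s2 by blast
          have eb: "0 \<le> node_eta pa A K W" "node_eta pa A K W \<le> 1" using qb W(2) WX by auto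
          have "bn_eta n X pa A K V = bn_eta n X pa A K (V' \<union> {W})" using W(5) V'_def by simp
          also have "\<dots> \<le> (1 - node_eta pa A K W) * bn_eta n X pa A K V' + node_eta pa A K W * bn_eta n X pa A K (V' \<union> pa W)"
            by (rule claim1) (use W WX V'_def in auto)
          also have "\<dots> \<le> (1 - node_eta pa A K W) * perc n X pa (node_eta pa A K) V' + node_eta pa A K W * perc n X pa (node_eta pa A K) (V' \<union> pa W)"
            by (intro add_mono mult_left_mono ih1 ih2) (use eb in auto)
          also have "\<dots> = perc n X pa (node_eta pa A K) (V' \<union> {W})"
            by (rule perc_rec[symmetric]) (use W WX V'_def in auto)
          also have "\<dots> = perc n X pa (node_eta pa A K) V" using W(5) V'_def by simp
          finally show ?thesis .
        qed
      qed
    qed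
  qed
  thus "V \<subseteq> {..<n} \<Longrightarrow> ?thesis" by blast
qed

lemma claim3:
  assumes lt1: "\<forall>v<n. v \<noteq> X \<longrightarrow> node_eta pa A K v < 1"
  shows "V \<subseteq> {..<n} \<Longrightarrow> X \<notin> V \<Longrightarrow> bn_eta n X pa A K V < 1"
proof -
  have "\<forall>V. V \<subseteq> {..<n} \<longrightarrow> V \<subseteq> {..<k} \<longrightarrow> X \<notin> V \<longrightarrow> bn_eta n X pa A K V < 1" for k
  proof (induction k rule: less_induct)
    case (less k)
    show ?case
    proof (intro allI impI)
      fix V assume Vn: "V \<subseteq> {..<n}" and Vk: "V \<subseteq> {..<k}" and XV: "X \<notin> V"
      show "bn_eta n X pa A K V < 1"
      proof (cases "V = {}")
        case True
        then show ?thesis using bn_eta_empty by simp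
      next
        case False
        obtain W where W: "W \<in> V" "W < n" "W \<notin> V - {W}" "\<forall>v\<in>V - {W}. v < W" "V = (V - {W}) \<union> {W}"
          using max_split[OF Vn False] by blast
        define V' where "V' = V - {W}"
        have WX: "W \<noteq> X" using W XV by auto
        have Wk: "W < k" using W Vk by auto
        have paW: "pa W \<subseteq> {..<W}" using pa_lt[OF W(2)] .
        have s1: "V' \<subseteq> {..<n}" "V' \<subseteq> {..<W}" "X \<notin> V'" using Vn W XV unfolding V'_def by auto
        have s2: "V' \<union> pa W \<subseteq> {..<n}" using s1 paW W by auto
        have ih1: "bn_eta n X pa A K V' < 1" using less.IH[OF Wk] s1 by blast
        have e2: "bn_eta n X pa A K (V' \<union> pa W) \<le> 1" using bn_eta_bounds[OF s2] by simp
        have eb: "0 \<le> node_eta pa A K W" "node_eta pa A K W < 1" using node_eta_bounds W(2) WX lt1 by auto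
        have "bn_eta n X pa A K V = bn_eta n X pa A K (V' \<union> {W})" using W(5) V'_def by simp
        also have "\<dots> \<le> (1 - node_eta pa A K W) * bn_eta n X pa A K V' + node_eta pa A K W * bn_eta n X pa A K (V' \<union> pa W)"
          by (rule claim1) (use W WX V'_def in auto)
        also have "\<dots> < (1 - node_eta pa A K W) * 1 + node_eta pa A K W * 1"
          by (intro add_less_le_mono mult_strict_left_mono mult_left_mono ih1 e2) (use eb in auto)
        also have "\<dots> = 1" by simp
        finally show ?thesis .
      qed
    qed
  qed
  thus "V \<subseteq> {..<n} \<Longrightarrow> X \<notin> V \<Longrightarrow> ?thesis" by blast
qed

end

theorem theorem6:
  fixes n X :: nat and pa :: "nat \<Rightarrow> nat set" and A :: "nat \<Rightarrow> 'a set"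
    and K :: "nat \<Rightarrow> (nat \<Rightarrow> 'a) \<Rightarrow> 'a \<Rightarrow> real"
  assumes bn: "bayes_net n X pa A K"
  shows
    "(\<forall>W V. V \<subseteq> {..<n} \<longrightarrow> W < n \<longrightarrow> W \<notin> V \<longrightarrow> W \<noteq> X \<longrightarrow> (\<forall>v\<in>V. v < W) \<longrightarrow>
        bn_eta n X pa A K (V \<union> {W})
          \<le> (1 - node_eta pa A K W) * bn_eta n X pa A K V
            + node_eta pa A K W * bn_eta n X pa A K (V \<union> pa W))
     \<and> (\<forall>V. V \<subseteq> {..<n} \<longrightarrow> bn_eta n X pa A K V \<le> perc n X pa (node_eta pa A K) V)
     \<and> ((\<forall>v<n. v \<noteq> X \<longrightarrow> node_eta pa A K v < 1) \<longrightarrow>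
          (\<forall>V. V \<subseteq> {..<n} \<longrightarrow> X \<notin> V \<longrightarrow> bn_eta n X pa A K V < 1))"
  proof -
  interpret BN n X pa A K by unfold_locales (rule bn)
  show ?thesis using claim1 claim2 claim3 by blast
qed

end
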